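(* For every integer $k\ge 2$, there exists a connected twin-free graph $G$ with $n=2^{k-1}+k-2$ vertices for which $i_{\max}(G)=k$.
   Context: $i_{\max}(G)$ denotes the number of maximal independent sets of $G$. A graph is twin-free if no two vertices have the same open neighbourhood. *)

theory Defs
  imports Main
begin

definition simple_graph :: "'a set \<Rightarrow> ('a \<Rightarrow> 'a \<Rightarrow> bool) \<Rightarrow> bool" where
  "simple_graph V E \<longleftrightarrow> finite V \<and> (\<forall>u v. E u v \<longrightarrow> u \<in> V \<and> v \<in> V)
     \<and> (\<forall>u v. E u v \<longrightarrow> E v u) \<and> (\<forall>v. \<not> E v v)"

definition open_nbhd :: "'a set \<Rightarrow> ('a \<Rightarrow> 'a \<Rightarrow> bool) \<Rightarrow> 'a \<Rightarrow> 'a set" where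
  "open_nbhd V E v = {u \<in> V. E v u}"

definition connected_graph :: "'a set \<Rightarrow> ('a \<Rightarrow> 'a \<Rightarrow> bool) \<Rightarrow> bool" where
  "connected_graph V E \<longleftrightarrow> V \<noteq> {} \<and>
     (\<forall>u\<in>V. \<forall>v\<in>V. (\<lambda>x y. E x y)\<^sup>*\<^sup>* u v)"

definition twin_free :: "'a set \<Rightarrow> ('a \<Rightarrow> 'a \<Rightarrow> bool) \<Rightarrow> bool" where
  "twin_free V E \<longleftrightarrow> (\<forall>u\<in>V. \<forall>v\<in>V. u \<noteq> v \<longrightarrow> open_nbhd V E u \<noteq> open_nbhd V E v)"

definition independent_set :: "'a set \<Rightarrow> ('a \<Rightarrow> 'a \<Rightarrow> bool) \<Rightarrow> 'a set \<Rightarrow> bool" where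
  "independent_set V E S \<longleftrightarrow> S \<subseteq> V \<and> (\<forall>u\<in>S. \<forall>v\<in>S. \<not> E u v)"

definition maximal_independent_set :: "'a set \<Rightarrow> ('a \<Rightarrow> 'a \<Rightarrow> bool) \<Rightarrow> 'a set \<Rightarrow> bool" where
  "maximal_independent_set V E S \<longleftrightarrow> independent_set V E S \<and>
     (\<forall>T. independent_set V E T \<and> S \<subseteq> T \<longrightarrow> T = S)"

definition i_max :: "'a set \<Rightarrow> ('a \<Rightarrow> 'a \<Rightarrow> bool) \<Rightarrow> nat" where
  "i_max V E = card {S. maximal_independent_set V E S}"

end

theory Submission
  imports Defs
begin

lemma bit_exp_nat: "bit ((2::nat)^i) j \<longleftrightarrow> j = i" by (simp add: bit_exp_iff)
lemma bit_small: "(b::nat) < 2^m \<Longrightarrow> bit b n \<Longrightarrow> n < m"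
  by (metis bit_take_bit_iff take_bit_nat_eq_self_iff)
lemma bit_nonzero: "(b::nat) \<noteq> 0 \<Longrightarrow> \<exists>n. bit b n" using bit_eq_iff[of b 0] by simp
lemma bit_differ: "(b::nat) < 2^m \<Longrightarrow> b' < 2^m \<Longrightarrow> b \<noteq> b' \<Longrightarrow> \<exists>n<m. bit b n \<noteq> bit b' n"
  by (metis bit_eq_iff bit_take_bit_iff take_bit_nat_eq_self_iff)

definition Vg :: "nat \<Rightarrow> nat set" where "Vg m = {1..<2^m+m}"
definition Eg :: "nat \<Rightarrow> nat \<Rightarrow> nat \<Rightarrow> bool" where
  "Eg m u v = (u \<in> Vg m \<and> v \<in> Vg m \<and> u \<noteq> v \<and>
     ((2^m \<le> u \<and> 2^m \<le> v) \<or> (u < 2^m \<and> 2^m \<le> v \<and> bit u (v - 2^m))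
      \<or> (v < 2^m \<and> 2^m \<le> u \<and> bit v (u - 2^m))))"

definition Bg :: "nat \<Rightarrow> nat set" where "Bg m = {1..<2^m}"
definition Tg :: "nat \<Rightarrow> nat \<Rightarrow> nat set" where
  "Tg m i = insert (2^m+i) {b \<in> Bg m. \<not> bit b i}"

lemma pow_pos_le[simp]: "Suc 0 \<le> (2::nat)^m + i" by (simp add: Suc_leI)
lemma pow_lt[simp]: "i < m \<Longrightarrow> (2::nat)^i < 2^m" by simp
lemma pow_ne[simp]: "i < m \<Longrightarrow> (2::nat)^i \<noteq> 2^m + j"
  using pow_lt[of i m] by linarith
lemma pow_ne2[simp]: "i < m \<Longrightarrow> 2^m + j \<noteq> (2::nat)^i"
  using pow_ne by metis

lemma pow_in_B: "i < m \<Longrightarrow> (2::nat)^i \<in> Bg m"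
  by (simp add: Bg_def)

lemma Bg_sub: "Bg m \<subseteq> Vg m" by (auto simp: Bg_def Vg_def)
lemma notB[simp]: "2^m + i \<notin> Bg m" by (simp add: Bg_def)

lemma B_indep: "independent_set (Vg m) (Eg m) (Bg m)"
  by (auto simp: independent_set_def Bg_def Vg_def Eg_def)

lemma B_max: "maximal_independent_set (Vg m) (Eg m) (Bg m)"
  unfolding maximal_independent_set_def
proof (intro conjI B_indep allI impI)
  fix T assume T: "independent_set (Vg m) (Eg m) T \<and> Bg m \<subseteq> T"
  show "T = Bg m"
  proof (rule ccontr)
    assume "T \<noteq> Bg m"
    then obtain x where x: "x \<in> T" "x \<notin> Bg m" using T by blast
    then have xV: "x \<in> Vg m" using T by (auto simp: independent_set_def)
    then have "2^m \<le> x" "x < 2^m + m" using x by (auto simp: Vg_def Bg_def)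
    then obtain i where i: "x = 2^m + i" "i < m" by (metis add_less_cancel_left le_Suc_ex)
    have pT: "2^i \<in> T" using T pow_in_B[OF i(2)] by blast
    have pV: "2^i \<in> Vg m" using pow_in_B[OF i(2)] Bg_sub by blast
    moreover have "Eg m (2^i) x" using i xV pV
      by (auto simp: Eg_def bit_exp_nat Bg_def)
    ultimately show False using T x pT by (auto simp: independent_set_def)
  qed
qed

lemma T_sub: "i < m \<Longrightarrow> Tg m i \<subseteq> Vg m"
  by (auto simp: Tg_def Bg_def Vg_def)

lemma T_indep: "i < m \<Longrightarrow> independent_set (Vg m) (Eg m) (Tg m i)"
  unfolding independent_set_def using T_sub
  by (auto simp: Tg_def Bg_def Eg_def)

lemma S_sub_T:
  assumes S: "independent_set (Vg m) (Eg m) S" and i: "i < m" "2^m + i \<in> S"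
  shows "S \<subseteq> Tg m i"
proof
  fix x assume xS: "x \<in> S"
  have xV: "x \<in> Vg m" using S xS by (auto simp: independent_set_def)
  have cV: "2^m + i \<in> Vg m" using i by (auto simp: Vg_def)
  have ne: "\<not> Eg m x (2^m+i)" using S xS i by (auto simp: independent_set_def)
  show "x \<in> Tg m i"
  proof (cases "x < 2^m")
    case True
    then have "x \<in> Bg m" using xV by (auto simp: Vg_def Bg_def)
    moreover have "\<not> bit x i" using ne True xV cV by (auto simp: Eg_def)
    ultimately show ?thesis by (simp add: Tg_def)
  next
    case False
    then have "x = 2^m + i" using ne xV cV by (auto simp: Eg_def)
    then show ?thesis by (simp add: Tg_def)
  qed
qed

lemma T_max: "i < m \<Longrightarrow> maximal_independent_set (Vg m) (Eg m) (Tg m i)"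
  unfolding maximal_independent_set_def
proof (intro conjI T_indep allI impI)
  fix T assume i: "i < m" and T: "independent_set (Vg m) (Eg m) T \<and> Tg m i \<subseteq> T"
  have "2^m + i \<in> T" using T by (auto simp: Tg_def)
  then have "T \<subseteq> Tg m i" using S_sub_T T i by blast
  then show "T = Tg m i" using T by blast
qed

lemma MIS_char:
  assumes "maximal_independent_set (Vg m) (Eg m) S"
  shows "S = Bg m \<or> (\<exists>i<m. S = Tg m i)"
proof (cases "\<exists>i<m. 2^m + i \<in> S")
  case True
  then obtain i where i: "i < m" "2^m + i \<in> S" by blast
  have "S \<subseteq> Tg m i" using S_sub_T assms i by (auto simp: maximal_independent_set_def)
  then have "Tg m i = S" using assms T_indep[OF i(1)] by (auto simp: maximal_independent_set_def)
  then show ?thesis using i by auto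
next
  case False
  have "S \<subseteq> Bg m"
  proof
    fix x assume xS: "x \<in> S"
    have xV: "x \<in> Vg m" using assms xS by (auto simp: maximal_independent_set_def independent_set_def)
    show "x \<in> Bg m"
    proof (rule ccontr)
      assume "x \<notin> Bg m"
      then have "2^m \<le> x" "x < 2^m + m" using xV by (auto simp: Vg_def Bg_def)
      then obtain i where "x = 2^m + i" "i < m" by (metis add_less_cancel_left le_Suc_ex)
      then show False using False xS by blast
    qed
  qed
  then have "S = Bg m" using assms B_indep by (auto simp: maximal_independent_set_def)
  then show ?thesis by blast
qed

lemma MIS_set: "{S. maximal_independent_set (Vg m) (Eg m) S} = insert (Bg m) (Tg m ` {..<m})"
  using MIS_char B_max T_max by blast

lemma card_MIS: "i_max (Vg m) (Eg m) = m + 1"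
proof -
  have inj: "inj_on (Tg m) {..<m}"
  proof
    fix i j assume "i \<in> {..<m}" "j \<in> {..<m}" "Tg m i = Tg m j"
    then have "2^m + i \<in> Tg m j" by (metis insertI1 Tg_def)
    then show "i = j" unfolding Tg_def using notB by auto
  qed
  have "Bg m \<notin> Tg m ` {..<m}" by (auto simp: Tg_def Bg_def)
  then show ?thesis unfolding i_max_def MIS_set using inj
    by (simp add: card_image)
qed

lemma simple: "simple_graph (Vg m) (Eg m)"
  by (auto simp: simple_graph_def Vg_def Eg_def)

lemma twinfree: "twin_free (Vg m) (Eg m)"
  unfolding twin_free_def
proof (intro ballI impI)
  fix u v assume uV: "u \<in> Vg m" and vV: "v \<in> Vg m" and uv: "u \<noteq> v"
  show "open_nbhd (Vg m) (Eg m) u \<noteq> open_nbhd (Vg m) (Eg m) v"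
  proof (cases "u < 2^m")
    case uB: True
    show ?thesis
    proof (cases "v < 2^m")
      case True
      then obtain n where n: "n < m" "bit u n \<noteq> bit v n" using bit_differ[OF uB True uv] by blast
      have cV: "2^m + n \<in> Vg m" using n by (auto simp: Vg_def)
      have "Eg m u (2^m+n) \<noteq> Eg m v (2^m+n)" using n uV vV cV uB True by (auto simp: Eg_def)
      then show ?thesis using cV by (auto simp: open_nbhd_def)
    next
      case False
      then obtain i where i: "v = 2^m + i" "i < m" using vV
        by (auto simp: Vg_def) (metis add_less_cancel_left le_Suc_ex not_le)
      have pV: "2^i \<in> Vg m" using pow_in_B[OF i(2)] Bg_sub by blast
      have "Eg m v (2^i)" using i pV vV by (auto simp: Eg_def bit_exp_nat)
      moreover have "\<not> Eg m u (2^i)" using uB i by (auto simp: Eg_def)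
      ultimately show ?thesis using pV by (auto simp: open_nbhd_def)
    qed
  next
    case uC: False
    then obtain i where i: "u = 2^m + i" "i < m" using uV
      by (auto simp: Vg_def) (metis add_less_cancel_left le_Suc_ex not_le)
    show ?thesis
    proof (cases "v < 2^m")
      case True
      have pV: "2^i \<in> Vg m" using pow_in_B[OF i(2)] Bg_sub by blast
      have "Eg m u (2^i)" using i pV uV by (auto simp: Eg_def bit_exp_nat)
      moreover have "\<not> Eg m v (2^i)" using True i by (auto simp: Eg_def)
      ultimately show ?thesis using pV by (auto simp: open_nbhd_def)
    next
      case False
      have "Eg m u v" using uC False uV vV uv by (auto simp: Eg_def)
      moreover have "\<not> Eg m v v" by (simp add: Eg_def)
      ultimately show ?thesis using vV by (auto simp: open_nbhd_def)
    qed
  qed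
qed

lemma connected:
  assumes m: "1 \<le> m"
  shows "connected_graph (Vg m) (Eg m)"
proof -
  let ?R = "(\<lambda>x y. Eg m x y)"
  have NV: "(2::nat)^m \<in> Vg m" using m by (auto simp: Vg_def)
  have both: "?R\<^sup>*\<^sup>* u (2^m) \<and> ?R\<^sup>*\<^sup>* (2^m) u" if uV: "u \<in> Vg m" for u
  proof (cases "u < 2^m")
    case True
    have "u \<noteq> 0" using uV by (auto simp: Vg_def)
    then obtain n where n: "bit u n" using bit_nonzero by blast
    have nm: "n < m" using bit_small[OF True n] .
    have cV: "2^m + n \<in> Vg m" using nm by (auto simp: Vg_def)
    have e1: "Eg m u (2^m+n)" "Eg m (2^m+n) u" using True n uV cV by (auto simp: Eg_def)
    have c: "?R\<^sup>*\<^sup>* (2^m+n) (2^m) \<and> ?R\<^sup>*\<^sup>* (2^m) (2^m+n)"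
    proof (cases "n = 0")
      case True then show ?thesis by simp
    next
      case False
      then have "Eg m (2^m+n) (2^m)" "Eg m (2^m) (2^m+n)" using cV NV by (auto simp: Eg_def)
      then show ?thesis by auto
    qed
    show ?thesis using e1 c
      by (meson converse_rtranclp_into_rtranclp rtranclp.rtrancl_into_rtrancl)
  next
    case False
    show ?thesis
    proof (cases "u = 2^m")
      case True then show ?thesis by simp
    next
      case ne: False
      then have "Eg m u (2^m)" "Eg m (2^m) u" using False uV NV by (auto simp: Eg_def)
      then show ?thesis by auto
    qed
  qed
  show ?thesis unfolding connected_graph_def
  proof (intro conjI ballI)
    show "Vg m \<noteq> {}" using NV by blast
  next
    fix u v assume "u \<in> Vg m" "v \<in> Vg m"
    then show "?R\<^sup>*\<^sup>* u v" using both by (meson rtranclp_trans)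
  qed
qed

lemma card_V: "card (Vg m) = 2^m + m - 1" by (simp add: Vg_def)

theorem proposition2p1:
  fixes k :: nat
  assumes "k \<ge> 2"
  shows "\<exists>(V :: nat set) E. simple_graph V E \<and> connected_graph V E \<and> twin_free V E
           \<and> card V = 2 ^ (k - 1) + k - 2 \<and> i_max V E = k"
proof -
  let ?m = "k - 1"
  have m: "1 \<le> ?m" using assms by simp
  have "card (Vg ?m) = 2 ^ (k - 1) + k - 2" using assms by (simp add: card_V)
  moreover have "i_max (Vg ?m) (Eg ?m) = k" using assms by (simp add: card_MIS)
  ultimately show ?thesis using simple twinfree connected[OF m] by blast
qed

end
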